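(* Let $\ell\ge 4$, $s\ge0$, $r\ge 2$ be integers and $k=\lfloor(\ell-2)/2\rfloor$. For every $\gamma>0$ there is $n_0$ such that for every $n\ge n_0$ the following holds: if $G$ is an $n$-vertex $B(\ell,s)$-free graph that maximizes $e_r(G)$ among all $n$-vertex $B(\ell,s)$-free graphs, or that maximizes $\mathcal N(S_r,G)$ among all $n$-vertex $B(\ell,s)$-free graphs, then there is a set $B\subseteq V(G)$ with $|B|=k$ such that at least $(1-\gamma)\binom{n}{r}$ of the $r$-element subsets of $V(G)$ have common neighborhood exactly $B$.
   Context: For a graph $G$ with degrees $d_1,\dots,d_n$, $e_r(G)=\sum_i d_i^r$ and $\mathcal N(S_r,G)=\sum_i\binom{d_i}{r}$ is the number of copies of the star $S_r$ with $r$ leaves. The broom $B(\ell,s)$ is the graph obtained from a path on $\ell$ vertices by adding $s$ new vertices, each joined only to a penultimate vertex of the path (a neighbor of an endpoint). The common neighborhood of a vertex set $X$ is the set of vertices adjacent to every vertex of $X$. *)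

theory Defs
  imports Complex_Main
begin

definition is_graph :: "nat \<Rightarrow> (nat \<Rightarrow> nat \<Rightarrow> bool) \<Rightarrow> bool" where
  "is_graph n E \<longleftrightarrow> (\<forall>u v. E u v \<longrightarrow> E v u) \<and> (\<forall>u. \<not> E u u)
     \<and> (\<forall>u v. E u v \<longrightarrow> u < n \<and> v < n)"

definition degree :: "nat \<Rightarrow> (nat \<Rightarrow> nat \<Rightarrow> bool) \<Rightarrow> nat \<Rightarrow> nat" where
  "degree n E u = card {v \<in> {0..<n}. E u v}"

definition e_pow :: "nat \<Rightarrow> nat \<Rightarrow> (nat \<Rightarrow> nat \<Rightarrow> bool) \<Rightarrow> nat" where
  "e_pow r n E = (\<Sum>u\<in>{0..<n}. degree n E u ^ r)"

text \<open>N(S_r,G) = number of copies of the star with r leaves.\<close>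
definition star_count :: "nat \<Rightarrow> nat \<Rightarrow> (nat \<Rightarrow> nat \<Rightarrow> bool) \<Rightarrow> nat" where
  "star_count r n E = (\<Sum>u\<in>{0..<n}. degree n E u choose r)"

text \<open>The broom B(l,s) on vertices {0..<l+s}: path 0-1-...-(l-1), and the s extra
  vertices l..l+s-1 each joined only to vertex 1 (a neighbour of the endpoint 0).\<close>
definition broom_edge :: "nat \<Rightarrow> nat \<Rightarrow> nat \<Rightarrow> nat \<Rightarrow> bool" where
  "broom_edge l s i j \<longleftrightarrow>
     (i < l \<and> j < l \<and> (j = i + 1 \<or> i = j + 1))
     \<or> (l \<le> i \<and> i < l + s \<and> j = 1)
     \<or> (l \<le> j \<and> j < l + s \<and> i = 1)"

definition contains_subgraph ::
  "nat \<Rightarrow> (nat \<Rightarrow> nat \<Rightarrow> bool) \<Rightarrow> nat \<Rightarrow> (nat \<Rightarrow> nat \<Rightarrow> bool) \<Rightarrow> bool" where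
  "contains_subgraph n E m H \<longleftrightarrow>
     (\<exists>f. inj_on f {0..<m} \<and> f ` {0..<m} \<subseteq> {0..<n}
        \<and> (\<forall>i j. i < m \<longrightarrow> j < m \<longrightarrow> H i j \<longrightarrow> E (f i) (f j)))"

definition broom_free :: "nat \<Rightarrow> nat \<Rightarrow> nat \<Rightarrow> (nat \<Rightarrow> nat \<Rightarrow> bool) \<Rightarrow> bool" where
  "broom_free l s n E \<longleftrightarrow> \<not> contains_subgraph n E (l + s) (broom_edge l s)"

definition common_nbhd :: "nat \<Rightarrow> (nat \<Rightarrow> nat \<Rightarrow> bool) \<Rightarrow> nat set \<Rightarrow> nat set" where
  "common_nbhd n E X = {v \<in> {0..<n}. \<forall>x\<in>X. E x v}"

end

theory Submission
  imports Defs "HOL-Library.FuncSet"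
begin

lemma broom_from_path:
  assumes G: "is_graph n E"
  and inj: "inj_on p {0..<l}" and pn: "p ` {0..<l} \<subseteq> {0..<n}"
  and pe: "\<And>i. Suc i < l \<Longrightarrow> E (p i) (p (Suc i))"
  and l2: "l \<ge> 2"
  and A: "A \<subseteq> {0..<n}" "card A = s" "A \<inter> p ` {0..<l} = {}" "\<And>a. a \<in> A \<Longrightarrow> E (p 1) a"
  shows "\<not> broom_free l s n E"
proof -
  have fA: "finite A" using A(1) finite_subset by blast
  obtain g where g: "bij_betw g {0..<s} A" using ex_bij_betw_nat_finite[OF fA] A(2) by auto
  have gA: "\<And>j. j < s \<Longrightarrow> g j \<in> A" using g by (auto simp: bij_betw_def)
  have ginj: "inj_on g {0..<s}" using g by (auto simp: bij_betw_def)
  have sym: "\<And>u v. E u v \<Longrightarrow> E v u" using G by (auto simp: is_graph_def)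
  define f where "f i = (if i < l then p i else g (i - l))" for i
  have "inj_on f {0..<l+s}"
  proof (rule inj_onI)
    fix i j assume i: "i \<in> {0..<l+s}" and j: "j \<in> {0..<l+s}" and e: "f i = f j"
    show "i = j"
    proof (cases "i < l")
      case True
      show ?thesis
      proof (cases "j < l")
        case True with \<open>i<l\<close> e show ?thesis using inj by (auto simp: f_def inj_on_def)
      next
        case False
        then have "g (j - l) \<in> A" using j gA by auto
        moreover have "p i \<in> p ` {0..<l}" using \<open>i<l\<close> by auto
        moreover have "p i = g (j - l)" using e \<open>i<l\<close> False by (simp add: f_def)
        ultimately show ?thesis using A(3) by (metis IntI empty_iff)
      qed
    next
      case False
      show ?thesis
      proof (cases "j < l")
        case True
        then have "g (i - l) \<in> A" using i gA False by auto
        moreover have "p j \<in> p ` {0..<l}" using \<open>j<l\<close> by auto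
        moreover have "p j = g (i - l)" using e \<open>j<l\<close> False by (simp add: f_def)
        ultimately show ?thesis using A(3) by (metis IntI empty_iff)
      next
        case False2: False
        have "g (i - l) = g (j - l)" using e False False2 by (auto simp: f_def)
        then have "i - l = j - l" using ginj i j False False2 by (auto simp: inj_on_def)
        then show ?thesis using False False2 by auto
      qed
    qed
  qed
  moreover have "f ` {0..<l+s} \<subseteq> {0..<n}"
  proof
    fix x assume "x \<in> f ` {0..<l+s}"
    then obtain i where i: "i < l + s" "x = f i" by auto
    show "x \<in> {0..<n}"
    proof (cases "i < l")
      case True then show ?thesis using pn i by (auto simp: f_def image_subset_iff)
    next
      case False then have "g (i-l) \<in> A" using gA i by auto
      then show ?thesis using A(1) i False by (auto simp: f_def)
    qed
  qed
  moreover have "\<forall>i j. i < l+s \<longrightarrow> j < l+s \<longrightarrow> broom_edge l s i j \<longrightarrow> E (f i) (f j)"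
  proof (intro allI impI)
    fix i j assume i: "i < l+s" and j: "j < l+s" and b: "broom_edge l s i j"
    have p1: "f 1 = p 1" using l2 by (simp add: f_def)
    show "E (f i) (f j)"
      using b unfolding broom_edge_def
    proof (elim disjE conjE)
      assume "i < l" "j < l" "j = i + 1" then show ?thesis using pe by (simp add: f_def)
    next
      assume "i < l" "j < l" "i = j + 1" then show ?thesis using pe sym by (simp add: f_def)
    next
      assume "l \<le> i" "i < l + s" "j = 1"
      then show ?thesis using A(4)[OF gA[of "i-l"]] sym p1 by (auto simp: f_def)
    next
      assume "l \<le> j" "j < l + s" "i = 1"
      then show ?thesis using A(4)[OF gA[of "j-l"]] p1 by (auto simp: f_def)
    qed
  qed
  ultimately show ?thesis unfolding broom_free_def contains_subgraph_def by blast
qed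

lemma broom_mindeg:
  assumes G: "is_graph n E" and S: "S \<subseteq> {0..<n}" "S \<noteq> {}"
    and deg: "\<And>v. v \<in> S \<Longrightarrow> card {w\<in>S. E v w} \<ge> l + s"
    and l2: "l \<ge> 2"
  shows "\<not> broom_free l s n E"
proof -
  have fS: "finite S" using S(1) finite_subset by blast
  have path: "1 \<le> m \<Longrightarrow> m \<le> l \<Longrightarrow> (\<exists>p. inj_on p {0..<m} \<and> p ` {0..<m} \<subseteq> S \<and> (\<forall>i. Suc i < m \<longrightarrow> E (p i) (p (Suc i))))" for m
  proof (induction m)
    case 0 then show ?case by simp
  next
    case (Suc m)
    show ?case
    proof (cases "m = 0")
      case True
      obtain v where "v \<in> S" using S(2) by auto
      then show ?thesis using True by (intro exI[of _ "\<lambda>_. v"]) auto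
    next
      case False
      then obtain p where p: "inj_on p {0..<m}" "p ` {0..<m} \<subseteq> S" "\<forall>i. Suc i < m \<longrightarrow> E (p i) (p (Suc i))"
        using Suc by auto
      have pm: "p (m - 1) \<in> S" using p(2) False by auto
      define N where "N = {w\<in>S. E (p (m-1)) w} - p ` {0..<m}"
      have "card {w\<in>S. E (p (m-1)) w} - card (p ` {0..<m}) \<le> card N"
        unfolding N_def by (rule diff_card_le_card_Diff) auto
      moreover have "card (p ` {0..<m}) \<le> m" using card_image_le[of "{0..<m}" p] by simp
      moreover have "card {w\<in>S. E (p (m-1)) w} \<ge> l + s" using deg pm by blast
      ultimately have "card N > 0" using Suc.prems by linarith
      then obtain w where w: "w \<in> N" by (metis card_gt_0_iff ex_in_conv)
      define p' where "p' = p(m := w)"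
      have eq: "p' ` {0..<m} = p ` {0..<m}" unfolding p'_def by (intro image_cong) auto
      have "inj_on p' {0..<Suc m}"
      proof -
        have "inj_on p' {0..<m}" using p(1) unfolding p'_def by (rule inj_on_cong[THEN iffD1, rotated]) auto
        moreover have "p' m \<notin> p' ` {0..<m}" using w eq by (simp add: N_def p'_def)
        ultimately show ?thesis by (simp add: atLeast0_lessThan_Suc)
      qed
      moreover have "p' ` {0..<Suc m} \<subseteq> S" using p(2) w eq
        by (auto simp: atLeast0_lessThan_Suc N_def p'_def)
      moreover have "\<forall>i. Suc i < Suc m \<longrightarrow> E (p' i) (p' (Suc i))"
      proof (intro allI impI)
        fix i assume i: "Suc i < Suc m"
        show "E (p' i) (p' (Suc i))"
        proof (cases "Suc i = m")
          case True
          then have "i = m - 1" by simp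
          then show ?thesis using w True by (simp add: N_def p'_def)
        next
          case False
          then show ?thesis using p(3) i by (simp add: p'_def)
        qed
      qed
      ultimately show ?thesis by blast
    qed
  qed
  obtain p where p: "inj_on p {0..<l}" "p ` {0..<l} \<subseteq> S" "\<forall>i. Suc i < l \<longrightarrow> E (p i) (p (Suc i))"
    using path[of l] l2 by auto
  have p1: "p 1 \<in> S" using p(2) l2 by auto
  define N where "N = {w\<in>S. E (p 1) w} - p ` {0..<l}"
  have "card {w\<in>S. E (p 1) w} - card (p ` {0..<l}) \<le> card N"
    unfolding N_def by (rule diff_card_le_card_Diff) auto
  moreover have "card (p ` {0..<l}) \<le> l" using card_image_le[of "{0..<l}" p] by simp
  moreover have "card {w\<in>S. E (p 1) w} \<ge> l + s" using deg p1 by blast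
  ultimately have "card N \<ge> s" by linarith
  then obtain A where A: "A \<subseteq> N" "card A = s" by (meson obtain_subset_with_card_n)
  show ?thesis
  proof (rule broom_from_path[OF G p(1) _ _ l2])
    show "p ` {0..<l} \<subseteq> {0..<n}" using p(2) S(1) by blast
    show "\<And>i. Suc i < l \<Longrightarrow> E (p i) (p (Suc i))" using p(3) by blast
    show "A \<subseteq> {0..<n}" using A(1) S(1) by (auto simp: N_def)
    show "card A = s" by fact
    show "A \<inter> p ` {0..<l} = {}" using A(1) by (auto simp: N_def)
    show "\<And>a. a \<in> A \<Longrightarrow> E (p 1) a" using A(1) by (auto simp: N_def)
  qed
qed

lemma broom_biclique:
  assumes G: "is_graph n E" and Hs: "Hs \<subseteq> {0..<n}" "card Hs = k + 1"
    and C: "C \<subseteq> {0..<n}" "card C \<ge> k + 2 + s" and CH: "\<And>u v. u \<in> C \<Longrightarrow> v \<in> Hs \<Longrightarrow> E u v"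
    and l2: "l \<ge> 2" and lk: "l \<le> 2 * k + 3"
  shows "\<not> broom_free l s n E"
proof -
  have sym: "\<And>u v. E u v \<Longrightarrow> E v u" using G by (auto simp: is_graph_def)
  have irr: "\<And>u. \<not> E u u" using G by (auto simp: is_graph_def)
  have fH: "finite Hs" using Hs(1) finite_subset by blast
  obtain h where h: "bij_betw h {0..<k+1} Hs" using ex_bij_betw_nat_finite[OF fH] Hs(2) by auto
  obtain C' where C': "C' \<subseteq> C" "card C' = k + 2 + s" "finite C'" by (meson C(2) obtain_subset_with_card_n)
  obtain c where c: "bij_betw c {0..<k+2+s} C'" using ex_bij_betw_nat_finite[OF C'(3)] C'(2) by auto
  have hH: "\<And>j. j < k+1 \<Longrightarrow> h j \<in> Hs" using h by (auto simp: bij_betw_def)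
  have cC: "\<And>j. j < k+2+s \<Longrightarrow> c j \<in> C" using c C'(1) by (auto simp: bij_betw_def)
  have hinj: "inj_on h {0..<k+1}" using h by (auto simp: bij_betw_def)
  have cinj: "inj_on c {0..<k+2+s}" using c by (auto simp: bij_betw_def)
  have disj: "\<And>u. u \<in> C \<Longrightarrow> u \<notin> Hs" using CH irr by blast
  define p where "p i = (if even i then c (i div 2) else h (i div 2))" for i
  have pev: "\<And>i. i < l \<Longrightarrow> even i \<Longrightarrow> i div 2 < k + 2" using lk by auto
  have pod: "\<And>i. i < l \<Longrightarrow> odd i \<Longrightarrow> i div 2 < k + 1" using lk by (auto elim!: oddE)
  have inj: "inj_on p {0..<l}"
  proof (rule inj_onI)
    fix i j assume i: "i \<in> {0..<l}" and j: "j \<in> {0..<l}" and e: "p i = p j"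
    show "i = j"
    proof (cases "even i")
      case True
      show ?thesis
      proof (cases "even j")
        case True
        then have "c (i div 2) = c (j div 2)" using e \<open>even i\<close> by (simp add: p_def)
        then have "i div 2 = j div 2" using cinj pev[of i] pev[of j] i j True \<open>even i\<close>
          by (auto simp: inj_on_def)
        then show ?thesis using True \<open>even i\<close> by (metis dvd_mult_div_cancel)
      next
        case False
        then have "c (i div 2) = h (j div 2)" using e \<open>even i\<close> by (simp add: p_def)
        moreover have "c (i div 2) \<in> C" using cC pev[of i] i \<open>even i\<close> by auto
        moreover have "h (j div 2) \<in> Hs" using hH pod[of j] j False by auto
        ultimately show ?thesis using disj by metis
      qed
    next
      case False
      show ?thesis
      proof (cases "even j")
        case True
        then have "h (i div 2) = c (j div 2)" using e False by (simp add: p_def)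
        moreover have "c (j div 2) \<in> C" using cC pev[of j] j True by auto
        moreover have "h (i div 2) \<in> Hs" using hH pod[of i] i False by auto
        ultimately show ?thesis using disj by metis
      next
        case False2: False
        then have "h (i div 2) = h (j div 2)" using e False by (simp add: p_def)
        then have "i div 2 = j div 2" using hinj pod[of i] pod[of j] i j False2 False
          by (auto simp: inj_on_def)
        then show ?thesis using False2 False by (metis odd_two_times_div_two_succ)
      qed
    qed
  qed
  have pin: "p i \<in> C \<union> Hs" if "i < l" for i
  proof (cases "even i")
    case True
    then have "i div 2 < k + 2 + s" using pev[OF that] by linarith
    then show ?thesis using cC True by (auto simp: p_def)
  next
    case False
    then show ?thesis using hH pod[OF that] by (auto simp: p_def)
  qed
  define A where "A = c ` {k+2..<k+2+s}"
  show ?thesis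
  proof (rule broom_from_path[OF G inj _ _ l2])
    show "p ` {0..<l} \<subseteq> {0..<n}" using pin C(1) Hs(1) by fastforce
    show "E (p i) (p (Suc i))" if "Suc i < l" for i
    proof (cases "even i")
      case True
      then have "p i = c (i div 2)" "p (Suc i) = h (i div 2)" by (auto simp: p_def)
      then show ?thesis using CH cC hH pev[of i] pod[of "Suc i"] that True by auto
    next
      case False
      then have "p i = h (i div 2)" "p (Suc i) = c (Suc i div 2)" by (auto simp: p_def)
      moreover have "Suc i div 2 < k + 2" using pev[of "Suc i"] that False by auto
      ultimately show ?thesis using CH cC hH pod[of i] that False sym by auto
    qed
    show "A \<subseteq> {0..<n}" using cC C(1) by (auto simp: A_def)
    show "card A = s" unfolding A_def
      by (subst card_image) (auto intro: inj_on_subset[OF cinj])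
    show "A \<inter> p ` {0..<l} = {}"
    proof (rule ccontr)
      assume "A \<inter> p ` {0..<l} \<noteq> {}"
      then obtain x where x: "x \<in> A" "x \<in> p ` {0..<l}" by blast
      then obtain j where j: "j \<in> {k+2..<k+2+s}" and xj: "x = c j" by (auto simp: A_def)
      obtain i where i: "i < l" and xi: "x = p i" using x(2) by auto
      have e: "c j = p i" using xj xi by simp
      show False
      proof (cases "even i")
        case True
        then have "c j = c (i div 2)" using e by (simp add: p_def)
        then have "j = i div 2" using cinj j pev[of i] i True by (auto simp: inj_on_def)
        then show False using j pev[of i] i True by auto
      next
        case False
        then have "c j = h (i div 2)" using e by (simp add: p_def)
        then show False using cC[of j] hH[of "i div 2"] pod[of i] i False j disj by auto
      qed
    qed
    show "E (p 1) a" if aA: "a \<in> A" for a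
    proof -
      have "p 1 = h 0" by (simp add: p_def)
      moreover obtain j where "j \<in> {k+2..<k+2+s}" "a = c j" using aA by (auto simp: A_def)
      ultimately show ?thesis using CH cC hH sym by auto
    qed
  qed
qed


lemma edge_bound:
  assumes G: "is_graph n E" and bf: "broom_free l s n E" and l2: "l \<ge> 2"
  shows "(\<Sum>v\<in>{0..<n}. degree n E v) \<le> 2 * (l + s) * n"
proof -
  define t where "t = l + s"
  define pairs where "pairs S = {(u,w). u \<in> S \<and> w \<in> S \<and> E u w}" for S
  have sym: "\<And>u v. E u v \<Longrightarrow> E v u" using G by (auto simp: is_graph_def)
  define P where "P S \<longleftrightarrow> card (pairs S) \<le> 2 * t * card S" for S
  have "P {0..<n}"
  proof (rule finite_remove_induct[where P=P])
    show "finite {0..<n}" by simp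
    show "P {}" by (simp add: pairs_def P_def)
  next
    fix A assume "finite A" "A \<noteq> {}" "A \<subseteq> {0..<n}" and IH: "\<And>x. x \<in> A \<Longrightarrow> P (A - {x})"
    show "P A"
    proof (cases "\<forall>v\<in>A. card {w\<in>A. E v w} \<ge> l + s")
      case True
      then have "\<not> broom_free l s n E" using broom_mindeg[OF G \<open>A \<subseteq> {0..<n}\<close> \<open>A \<noteq> {}\<close> _ l2] by blast
      then show ?thesis using bf by blast
    next
      case False
      then obtain v where v: "v \<in> A" and dv: "card {w\<in>A. E v w} < t" by (auto simp: t_def)
      define N where "N = {w\<in>A. E v w}"
      have fN: "finite N" using \<open>finite A\<close> by (simp add: N_def)
      have "pairs A \<subseteq> pairs (A - {v}) \<union> ({v} \<times> N) \<union> (N \<times> {v})"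
        using sym by (auto simp: pairs_def N_def)
      moreover have "finite (pairs (A - {v}))"
        by (rule finite_subset[of _ "A \<times> A"]) (auto simp: pairs_def \<open>finite A\<close>)
      ultimately have "card (pairs A) \<le> card (pairs (A - {v}) \<union> ({v} \<times> N) \<union> (N \<times> {v}))"
        using fN by (intro card_mono) auto
      also have "\<dots> \<le> card (pairs (A - {v})) + card ({v} \<times> N) + card (N \<times> {v})"
        by (meson card_Un_le le_trans add_le_mono1)
      also have "\<dots> = card (pairs (A - {v})) + 2 * card N" by (simp add: card_cartesian_product)
      also have "\<dots> \<le> 2 * t * card (A - {v}) + 2 * card N" using IH[OF v] by (simp add: P_def)
      also have "\<dots> \<le> 2 * t * card A"
      proof -
        have cA: "card A = card (A - {v}) + 1" using v \<open>finite A\<close>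
          using card_Suc_Diff1[OF \<open>finite A\<close> v] by simp
        have "2 * t * card A = 2 * t * card (A - {v}) + 2 * t" by (simp add: cA algebra_simps)
        then show ?thesis using dv by (simp add: N_def)
      qed
      finally show ?thesis unfolding P_def .
    qed
  qed
  have "pairs {0..<n} = Sigma {0..<n} (\<lambda>u. {w\<in>{0..<n}. E u w})" by (auto simp: pairs_def)
  then have "card (pairs {0..<n}) = (\<Sum>v\<in>{0..<n}. degree n E v)"
    by (simp add: card_SigmaI degree_def)
  then show ?thesis using \<open>P {0..<n}\<close> by (simp add: t_def P_def)
qed

definition E0 :: "nat \<Rightarrow> nat \<Rightarrow> nat \<Rightarrow> nat \<Rightarrow> bool" where
  "E0 n k u v \<longleftrightarrow> u < n \<and> v < n \<and> u \<noteq> v \<and> (u < k \<or> v < k)"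

lemma E0_graph: "is_graph n (E0 n k)"
  by (auto simp: is_graph_def E0_def)

lemma E0_free:
  assumes l2: "l \<ge> 2"
  shows "broom_free l s n (E0 n ((l - 2) div 2))"
proof -
  define k where "k = (l - 2) div 2"
  {
    fix f assume inj: "inj_on f {0..<l+s}" and im: "f ` {0..<l+s} \<subseteq> {0..<n}"
      and ed: "\<forall>i j. i < l+s \<longrightarrow> j < l+s \<longrightarrow> broom_edge l s i j \<longrightarrow> E0 n k (f i) (f j)"
    define I where "I = {i. i < l \<and> f i < k}"
    have "{0..<l div 2} \<subseteq> (\<lambda>i. i div 2) ` I"
    proof
      fix j assume j: "j \<in> {0..<l div 2}"
      then have a: "2*j + 1 < l" by auto
      then have "broom_edge l s (2*j) (2*j+1)" by (simp add: broom_edge_def)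
      then have "E0 n k (f (2*j)) (f (2*j+1))" using ed a by auto
      then have "2*j \<in> I \<or> 2*j+1 \<in> I" using a by (auto simp: E0_def I_def)
      then show "j \<in> (\<lambda>i. i div 2) ` I"
      proof
        assume "2*j \<in> I" then show ?thesis by (rule rev_image_eqI) simp
      next
        assume "2*j+1 \<in> I" then show ?thesis by (rule rev_image_eqI) simp
      qed
    qed
    moreover have fI: "finite I" by (auto simp: I_def)
    ultimately have "card {0..<l div 2} \<le> card ((\<lambda>i. i div 2) ` I)"
      by (intro card_mono) auto
    then have "l div 2 \<le> card ((\<lambda>i. i div 2) ` I)" by simp
    also have "\<dots> \<le> card I" using fI card_image_le by blast
    also have "\<dots> = card (f ` I)"
      using inj by (intro card_image[symmetric] inj_on_subset[OF inj]) (auto simp: I_def)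
    also have "\<dots> \<le> card {0..<k}" by (intro card_mono) (auto simp: I_def)
    finally have "l div 2 \<le> k" by simp
    then have False using l2 unfolding k_def by linarith
  }
  then show ?thesis unfolding broom_free_def contains_subgraph_def k_def[symmetric] by blast
qed

lemma E0_degree:
  assumes "u < k" "k \<le> n"
  shows "degree n (E0 n k) u = n - 1"
proof -
  have "{v\<in>{0..<n}. E0 n k u v} = {0..<n} - {u}" using assms by (auto simp: E0_def)
  then show ?thesis using assms by (simp add: degree_def)
qed

lemma E0_epow:
  assumes "k \<le> n"
  shows "k * (n - 1) ^ r \<le> e_pow r n (E0 n k)"
proof -
  have "k * (n - 1) ^ r = (\<Sum>u\<in>{0..<k}. degree n (E0 n k) u ^ r)"
    using E0_degree[OF _ assms] by simp
  also have "\<dots> \<le> (\<Sum>u\<in>{0..<n}. degree n (E0 n k) u ^ r)"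
    using assms by (intro sum_mono2) auto
  finally show ?thesis by (simp add: e_pow_def)
qed

lemma E0_star:
  assumes "k \<le> n"
  shows "k * ((n - 1) choose r) \<le> star_count r n (E0 n k)"
proof -
  have "k * ((n - 1) choose r) = (\<Sum>u\<in>{0..<k}. degree n (E0 n k) u choose r)"
    using E0_degree[OF _ assms] by simp
  also have "\<dots> \<le> (\<Sum>u\<in>{0..<n}. degree n (E0 n k) u choose r)"
    using assms by (intro sum_mono2) auto
  finally show ?thesis by (simp add: star_count_def)
qed


lemma card_swap:
  assumes "finite A" "finite B"
  shows "(\<Sum>a\<in>A. card {b\<in>B. R a b}) = (\<Sum>b\<in>B. card {a\<in>A. R a b})"
  using sum.swap_restrict[OF assms, of "\<lambda>_ _. (1::nat)" R] by simp

lemma card_filter_sum: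
  assumes "finite A"
  shows "card {x\<in>A. P x} = (\<Sum>x\<in>A. if P x then 1 else 0::nat)"
  using sum.inter_filter[OF assms, of "\<lambda>_. (1::nat)" P] by simp

lemma degree_sym:
  assumes G: "is_graph n E"
  shows "card {u\<in>{0..<n}. E u v} = degree n E v"
proof -
  have "{u\<in>{0..<n}. E u v} = {u\<in>{0..<n}. E v u}" using G by (auto simp: is_graph_def)
  then show ?thesis by (simp add: degree_def)
qed

lemma tuple_bound:
  assumes G: "is_graph n E" and r1: "r \<ge> 1" and k1: "k \<ge> 1"
    and H: "H \<subseteq> {0..<n}"
    and W_def: "W = {u\<in>{0..<n}. k + 1 \<le> card {v\<in>H. E u v}}"
    and calT_def: "\<T> = {T. T \<subseteq> H \<and> card T = k}"
    and V_def: "V = (\<lambda>T. {u\<in>{0..<n}. u \<notin> W \<and> {v\<in>H. E u v} = T})"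
  shows "(\<Sum>v\<in>H. degree n E v ^ r) \<le> card H * (n ^ r - (n - card W) ^ r) + (k - 1) * n ^ r
          + (\<Sum>T\<in>\<T>. card (V T) ^ r)"
proof -
  define P where "P = PiE {0..<r} (\<lambda>_. {0..<n})"
  have fP: "finite P" by (simp add: P_def finite_PiE)
  have fH: "finite H" using H finite_subset by blast
  have fT: "finite \<T>" unfolding calT_def
    by (rule finite_subset[of _ "Pow H"]) (auto simp: fH)
  have Wn: "W \<subseteq> {0..<n}" by (auto simp: W_def)
  define hit where "hit x \<longleftrightarrow> (\<exists>i<r. x i \<in> W)" for x
  define F where "F x = card {v\<in>H. \<forall>i<r. E (x i) v}" for x
  have step1: "degree n E v ^ r = card {x\<in>P. \<forall>i<r. E (x i) v}" if "v \<in> H" for v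
  proof -
    have "{x\<in>P. \<forall>i<r. E (x i) v} = PiE {0..<r} (\<lambda>_. {u\<in>{0..<n}. E u v})"
      by (auto simp: P_def PiE_iff extensional_def)
    then have "card {x\<in>P. \<forall>i<r. E (x i) v} = card {u\<in>{0..<n}. E u v} ^ r"
      by (simp add: card_PiE)
    then show ?thesis using degree_sym[OF G] by simp
  qed
  have "(\<Sum>v\<in>H. degree n E v ^ r) = (\<Sum>v\<in>H. card {x\<in>P. \<forall>i<r. E (x i) v})"
    using step1 by simp
  also have "\<dots> = (\<Sum>x\<in>P. F x)" unfolding F_def by (rule card_swap[OF fH fP])
  also have "\<dots> \<le> (\<Sum>x\<in>P. card H * (if hit x then 1 else 0) + (k - 1)
                      + (\<Sum>T\<in>\<T>. if x \<in> PiE {0..<r} (\<lambda>_. V T) then 1 else 0))"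
  proof (rule sum_mono)
    fix x assume xP: "x \<in> P"
    show "F x \<le> card H * (if hit x then 1 else 0) + (k - 1)
                      + (\<Sum>T\<in>\<T>. if x \<in> PiE {0..<r} (\<lambda>_. V T) then 1 else 0)"
    proof (cases "hit x")
      case True
      have "F x \<le> card H" unfolding F_def by (rule card_mono[OF fH]) auto
      then show ?thesis using True by simp
    next
      case False
      have x0n: "x 0 \<in> {0..<n}" using xP r1 by (auto simp: P_def PiE_iff extensional_def)
      have x0W: "x 0 \<notin> W" using False r1 by (auto simp: hit_def)
      have sub0: "{v\<in>H. \<forall>i<r. E (x i) v} \<subseteq> {v\<in>H. E (x 0) v}" using r1 by auto
      have c0: "card {v\<in>H. E (x 0) v} \<le> k" using x0W x0n by (auto simp: W_def)
      have Fk: "F x \<le> k" unfolding F_def using card_mono[OF _ sub0] fH c0 by fastforce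
      show ?thesis
      proof (cases "F x = k")
        case False
        then show ?thesis using Fk by simp
      next
        case True
        define T where "T = {v\<in>H. \<forall>i<r. E (x i) v}"
        have cT: "card T = k" using True by (simp add: T_def F_def)
        have "T \<subseteq> H" by (auto simp: T_def)
        then have TT: "T \<in> \<T>" using cT by (simp add: calT_def)
        have "x \<in> PiE {0..<r} (\<lambda>_. V T)"
        proof -
          have "x i \<in> V T" if i: "i < r" for i
          proof -
            have xin: "x i \<in> {0..<n}" using xP i by (auto simp: P_def PiE_iff extensional_def)
            have xW: "x i \<notin> W" using False i by (auto simp: hit_def)
            have ci: "card {v\<in>H. E (x i) v} \<le> k" using xW xin by (auto simp: W_def)
            have sub: "T \<subseteq> {v\<in>H. E (x i) v}" using i by (auto simp: T_def)
            from cT have "T = {v\<in>H. E (x i) v}"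
              using card_subset_eq[OF _ sub] fH ci card_mono[OF _ sub] by fastforce
            then show ?thesis using xin xW by (simp add: V_def)
          qed
          moreover have "\<forall>i. i \<notin> {0..<r} \<longrightarrow> x i = undefined" using xP by (auto simp: P_def PiE_iff extensional_def)
          ultimately show ?thesis by (auto simp: PiE_iff extensional_def)
        qed
        then have "1 \<le> (\<Sum>T\<in>\<T>. if x \<in> PiE {0..<r} (\<lambda>_. V T) then 1 else (0::nat))"
          using member_le_sum[OF TT, of "\<lambda>T. if x \<in> PiE {0..<r} (\<lambda>_. V T) then 1 else (0::nat)"] fT
          by simp
        then show ?thesis using True k1 by simp
      qed
    qed
  qed
  also have "\<dots> = card H * (\<Sum>x\<in>P. if hit x then 1 else 0) + card P * (k - 1)
                 + (\<Sum>T\<in>\<T>. \<Sum>x\<in>P. if x \<in> PiE {0..<r} (\<lambda>_. V T) then 1 else 0)"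
    by (simp add: sum.distrib sum_distrib_left sum.swap[of _ \<T>])
  also have "\<dots> = card H * (n ^ r - (n - card W) ^ r) + (k - 1) * n ^ r
          + (\<Sum>T\<in>\<T>. card (V T) ^ r)"
  proof -
    have cP: "card P = n ^ r" by (simp add: P_def card_PiE)
    define Q where "Q = PiE {0..<r} (\<lambda>_. {0..<n} - W)"
    have QP: "Q \<subseteq> P" by (auto simp: P_def Q_def PiE_iff extensional_def)
    have hitQ: "{x\<in>P. hit x} = P - Q" by (auto simp: P_def Q_def PiE_iff extensional_def hit_def)
    have cQ: "card Q = (n - card W) ^ r"
    proof -
      have "card ({0..<n} - W) = n - card W"
        using card_Diff_subset[OF finite_subset[OF Wn] Wn] by simp
      then show ?thesis by (simp add: Q_def card_PiE)
    qed
    have "(\<Sum>x\<in>P. if hit x then 1 else 0) = card {x\<in>P. hit x}"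
      using card_filter_sum[OF fP] by simp
    also have "\<dots> = n ^ r - (n - card W) ^ r"
      using hitQ QP cQ cP fP by (simp add: card_Diff_subset finite_subset)
    finally have 1: "(\<Sum>x\<in>P. if hit x then 1 else 0) = n ^ r - (n - card W) ^ r" .
    have 2: "(\<Sum>x\<in>P. if x \<in> PiE {0..<r} (\<lambda>_. V T) then 1 else 0) = card (V T) ^ r" for T
    proof -
      have "(\<Sum>x\<in>P. if x \<in> PiE {0..<r} (\<lambda>_. V T) then 1 else 0) = card {x\<in>P. x \<in> PiE {0..<r} (\<lambda>_. V T)}"
        using card_filter_sum[OF fP] by simp
      also have "{x\<in>P. x \<in> PiE {0..<r} (\<lambda>_. V T)} = PiE {0..<r} (\<lambda>_. V T)"
        by (auto simp: P_def PiE_iff extensional_def V_def)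
      finally show ?thesis by (simp add: card_PiE)
    qed
    show ?thesis using 1 2 cP by (simp add: mult.commute)
  qed
  finally show ?thesis .
qed


lemma choose_mono_n: "m \<le> n \<Longrightarrow> m choose r \<le> n choose (r::nat)"
proof (induction n)
  case 0 then show ?case by simp
next
  case (Suc n)
  have "n choose r \<le> Suc n choose r" by (cases r) auto
  then show ?case using Suc by (cases "m = Suc n") auto
qed

lemma fact_binom_le: "fact r * (d choose r) \<le> (d::nat) ^ r"
proof (induction r arbitrary: d)
  case 0 then show ?case by simp
next
  case (Suc r)
  show ?case
  proof (cases d)
    case 0 then show ?thesis by simp
  next
    case (Suc d')
    have "fact (Suc r) * (Suc d' choose Suc r) = fact r * (Suc r * (Suc d' choose Suc r))"
      by (simp add: algebra_simps)
    also have "\<dots> = fact r * (Suc d' * (d' choose r))" by (simp only: Suc_times_binomial)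
    also have "\<dots> = Suc d' * (fact r * (d' choose r))" by (simp add: algebra_simps)
    also have "\<dots> \<le> Suc d' * d' ^ r" using Suc.IH[of d'] by (intro mult_left_mono) auto
    also have "\<dots> \<le> Suc d' * Suc d' ^ r" by (intro mult_left_mono power_mono) auto
    finally show ?thesis using Suc by simp
  qed
qed

lemma fact_binom_ge: "r \<le> m \<Longrightarrow> (m + 1 - r) ^ r \<le> fact r * (m choose (r::nat))"
proof (induction r arbitrary: m)
  case 0 then show ?case by simp
next
  case (Suc r)
  then obtain m' where m: "m = Suc m'" by (cases m) auto
  have "(m + 1 - Suc r) ^ Suc r = (m' + 1 - r) * (m' + 1 - r) ^ r" using m by simp
  also have "\<dots> \<le> Suc m' * (fact r * (m' choose r))"
    using Suc.IH[of m'] Suc.prems m by (intro mult_mono) auto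
  also have "\<dots> = fact r * (Suc r * (Suc m' choose Suc r))"
    by (simp only: Suc_times_binomial) (simp add: algebra_simps)
  also have "\<dots> = fact (Suc r) * (m choose Suc r)" using m by (simp add: algebra_simps)
  finally show ?case .
qed

lemma lin_helper: "(x1::nat) \<le> x2 + x3 \<Longrightarrow> x2 = x4 + x5 \<Longrightarrow> x4 \<le> x6 \<Longrightarrow> x1 \<le> x5 + (x6 + x3)"
  by linarith

lemma binom_drop_aux:
  assumes "m \<le> n"
  shows "n choose Suc r' \<le> ((n - m) choose Suc r') + m * ((n - 1) choose r')"
  using assms
proof (induction m)
  case 0 then show ?case by simp
next
  case (Suc m)
  obtain j where j: "n - m = Suc j" using Suc.prems by (metis Suc_diff_Suc Suc_le_lessD)
  have nm: "n - Suc m = j" using j by simp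
  have B: "j choose r' \<le> (n - 1) choose r'"
  proof -
    have "j \<le> n - 1" using j by linarith
    then show ?thesis using choose_mono_n by simp
  qed
  have "n choose Suc r' \<le> ((n - m) choose Suc r') + m * ((n - 1) choose r')" using Suc.IH Suc.prems by simp
  also have "\<dots> = (j choose r') + (j choose Suc r') + m * ((n - 1) choose r')" by (simp add: j)
  also have "\<dots> \<le> ((n - 1) choose r') + (j choose Suc r') + m * ((n - 1) choose r')" using B by simp
  also have "\<dots> = (j choose Suc r') + Suc m * ((n - 1) choose r')" by simp
  finally show ?case using nm by simp
qed

lemma binom_drop:
  assumes "m \<le> n" "r \<ge> 1"
  shows "n choose r \<le> ((n - m) choose r) + m * ((n - 1) choose (r - 1))"
proof -
  obtain r' where "r = Suc r'" using assms(2) by (cases r) auto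
  then show ?thesis using binom_drop_aux[OF assms(1), of r'] by simp
qed

lemma binom_absorb:
  assumes "r \<ge> 1"
  shows "n * ((n - 1) choose (r - 1)) = r * (n choose r)"
  using binomial_absorption[of "r - 1" n] assms by simp

lemma W_bound:
  assumes G: "is_graph n E" and bf: "broom_free l s n E" and l2: "l \<ge> 2" and lk: "l \<le> 2 * k + 3"
    and H: "H \<subseteq> {0..<n}"
    and W_def: "W = {u\<in>{0..<n}. k + 1 \<le> card {v\<in>H. E u v}}"
  shows "card W \<le> 2 ^ card H * (k + 1 + s)"
proof -
  define I where "I = {S. S \<subseteq> H \<and> card S = k + 1}"
  define CN where "CN S = {u\<in>{0..<n}. \<forall>v\<in>S. E u v}" for S
  have fH: "finite H" using H finite_subset by blast
  have fI: "finite I" unfolding I_def by (rule finite_subset[of _ "Pow H"]) (auto simp: fH)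
  have "W \<subseteq> (\<Union>S\<in>I. CN S)"
  proof
    fix u assume u: "u \<in> W"
    then have "k + 1 \<le> card {v\<in>H. E u v}" by (simp add: W_def)
    then obtain S where S: "S \<subseteq> {v\<in>H. E u v}" "card S = k + 1" by (meson obtain_subset_with_card_n)
    then have "S \<in> I" "u \<in> CN S" using u by (auto simp: I_def CN_def W_def)
    then show "u \<in> (\<Union>S\<in>I. CN S)" by blast
  qed
  moreover have "(\<Union>S\<in>I. CN S) \<subseteq> {0..<n}" by (auto simp: CN_def)
  ultimately have "card W \<le> card (\<Union>S\<in>I. CN S)"
    by (intro card_mono) (auto intro: finite_subset)
  also have "\<dots> \<le> (\<Sum>S\<in>I. card (CN S))" by (rule card_UN_le[OF fI])
  also have "\<dots> \<le> (\<Sum>S\<in>I. k + 1 + s)"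
  proof (rule sum_mono)
    fix S assume S: "S \<in> I"
    show "card (CN S) \<le> k + 1 + s"
    proof (rule ccontr)
      assume "\<not> card (CN S) \<le> k + 1 + s"
      then have "card (CN S) \<ge> k + 2 + s" by simp
      moreover have SH: "S \<subseteq> {0..<n}" "card S = k + 1" using S H by (auto simp: I_def)
      moreover have CNn: "CN S \<subseteq> {0..<n}" by (auto simp: CN_def)
      moreover have CH: "\<And>u v. u \<in> CN S \<Longrightarrow> v \<in> S \<Longrightarrow> E u v" by (auto simp: CN_def)
      ultimately have "\<not> broom_free l s n E"
        using broom_biclique[OF G SH(1) SH(2) CNn _ CH l2 lk] by simp
      then show False using bf by blast
    qed
  qed
  also have "\<dots> = card I * (k + 1 + s)" by simp
  also have "\<dots> \<le> card (Pow H) * (k + 1 + s)"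
    by (intro mult_right_mono card_mono) (auto simp: I_def fH)
  finally show ?thesis using card_Pow[OF fH] by simp
qed

lemma H_bound:
  assumes "H = {v\<in>{0..<n}. \<epsilon> * real n \<le> real (degree n E v)}" and "\<epsilon> > 0" and "n > 0"
    and S: "(\<Sum>v\<in>{0..<n}. degree n E v) \<le> 2 * t * n"
  shows "real (card H) \<le> 2 * t / \<epsilon>"
proof -
  have "real (card H) * (\<epsilon> * n) = (\<Sum>v\<in>H. \<epsilon> * n)" by simp
  also have "\<dots> \<le> (\<Sum>v\<in>H. real (degree n E v))" using assms(1) by (intro sum_mono) auto
  also have "\<dots> \<le> (\<Sum>v\<in>{0..<n}. real (degree n E v))" using assms(1) by (intro sum_mono2) auto
  also have "\<dots> = real (\<Sum>v\<in>{0..<n}. degree n E v)" by simp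
  also have "\<dots> \<le> real (2 * t * n)" using S by (simp only: of_nat_le_iff)
  finally have 0: "real (card H) * (\<epsilon> * n) \<le> real (2 * t * n)" .
  then have 1: "real (card H) * (\<epsilon> * n) \<le> 2 * real t * real n" by simp
  have eq: "(real (card H) * \<epsilon>) * n = real (card H) * (\<epsilon> * n)" by (simp add: mult.assoc)
  have "(real (card H) * \<epsilon>) * n \<le> (2 * real t) * real n" using 1 unfolding eq by simp
  then have "real (card H) * \<epsilon> \<le> 2 * t" using assms(3) by (simp add: mult_le_cancel_right)
  then show ?thesis using assms(2) by (simp add: pos_le_divide_eq)
qed

lemma L_bound:
  assumes "L = {v\<in>{0..<n}. real (degree n E v) < \<epsilon> * real n}" and "r \<ge> 1" and e: "\<epsilon> > 0"
    and S: "(\<Sum>v\<in>{0..<n}. degree n E v) \<le> 2 * t * n"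
  shows "(\<Sum>v\<in>L. real (degree n E v) ^ r) \<le> (\<epsilon> * n) ^ (r - 1) * (2 * t * n)"
proof -
  have en: "\<epsilon> * n \<ge> 0" using e by simp
  have "(\<Sum>v\<in>L. real (degree n E v) ^ r) \<le> (\<Sum>v\<in>L. (\<epsilon> * n) ^ (r - 1) * real (degree n E v))"
  proof (rule sum_mono)
    fix v assume v: "v \<in> L"
    have "real (degree n E v) ^ r = real (degree n E v) ^ (r - 1) * real (degree n E v)"
      using assms(2) by (metis Suc_diff_le diff_Suc_1 power_Suc2)
    also have "\<dots> \<le> (\<epsilon> * n) ^ (r - 1) * real (degree n E v)"
      using v assms(1) by (intro mult_right_mono power_mono) auto
    finally show "real (degree n E v) ^ r \<le> (\<epsilon> * n) ^ (r - 1) * real (degree n E v)" .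
  qed
  also have "\<dots> = (\<epsilon> * n) ^ (r - 1) * (\<Sum>v\<in>L. real (degree n E v))" by (simp add: sum_distrib_left)
  also have "\<dots> \<le> (\<epsilon> * n) ^ (r - 1) * (\<Sum>v\<in>{0..<n}. real (degree n E v))"
    using assms(1) en by (intro mult_left_mono sum_mono2) auto
  also have "\<dots> \<le> (\<epsilon> * n) ^ (r - 1) * (2 * t * n)"
  proof -
    have "(\<Sum>v\<in>{0..<n}. real (degree n E v)) = real (\<Sum>v\<in>{0..<n}. degree n E v)" by simp
    also have "\<dots> \<le> real (2 * t * n)" using S by (simp only: of_nat_le_iff)
    finally show ?thesis using en by (intro mult_left_mono) simp_all
  qed
  finally show ?thesis .
qed

lemma bad_count:
  assumes G: "is_graph n E" and L: "L \<subseteq> {0..<n}"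
  shows "card {X. X \<subseteq> {0..<n} \<and> card X = r \<and> (\<exists>v\<in>L. \<forall>x\<in>X. E x v)}
           \<le> (\<Sum>v\<in>L. degree n E v choose r)"
proof -
  have fL: "finite L" using L finite_subset by blast
  have "{X. X \<subseteq> {0..<n} \<and> card X = r \<and> (\<exists>v\<in>L. \<forall>x\<in>X. E x v)}
        \<subseteq> (\<Union>v\<in>L. {X. X \<subseteq> {u\<in>{0..<n}. E u v} \<and> card X = r})" by fastforce
  then have "card {X. X \<subseteq> {0..<n} \<and> card X = r \<and> (\<exists>v\<in>L. \<forall>x\<in>X. E x v)}
       \<le> card (\<Union>v\<in>L. {X. X \<subseteq> {u\<in>{0..<n}. E u v} \<and> card X = r})"
    by (intro card_mono finite_UN_I fL) (auto intro: finite_subset[of _ "Pow {0..<n}"])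
  also have "\<dots> \<le> (\<Sum>v\<in>L. card {X. X \<subseteq> {u\<in>{0..<n}. E u v} \<and> card X = r})"
    by (rule card_UN_le[OF fL])
  also have "\<dots> = (\<Sum>v\<in>L. degree n E v choose r)"
  proof (intro sum.cong refl)
    fix v assume "v \<in> L"
    have "card {X. X \<subseteq> {u\<in>{0..<n}. E u v} \<and> card X = r} = card {u\<in>{0..<n}. E u v} choose r"
      by (rule n_subsets) simp
    then show "card {X. X \<subseteq> {u\<in>{0..<n}. E u v} \<and> card X = r} = degree n E v choose r"
      using degree_sym[OF G, of v] by simp
  qed
  finally show ?thesis .
qed

lemma good_subset:
  assumes G: "is_graph n E" and r1: "r \<ge> 1" and H: "H \<subseteq> {0..<n}" and TH: "T \<subseteq> H"
    and V_def: "V = {u\<in>{0..<n}. u \<notin> W \<and> {v\<in>H. E u v} = T}"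
  shows "{X. X \<subseteq> V \<and> card X = r} - {X. X \<subseteq> {0..<n} \<and> card X = r \<and> (\<exists>v\<in>{0..<n} - H. \<forall>x\<in>X. E x v)}
     \<subseteq> {X. X \<subseteq> {0..<n} \<and> card X = r \<and> common_nbhd n E X = T}"
proof
  fix X assume X: "X \<in> {X. X \<subseteq> V \<and> card X = r} - {X. X \<subseteq> {0..<n} \<and> card X = r \<and> (\<exists>v\<in>{0..<n} - H. \<forall>x\<in>X. E x v)}"
  have XV: "X \<subseteq> V" and cX: "card X = r" using X by auto
  have Xn: "X \<subseteq> {0..<n}" using XV by (auto simp: V_def)
  have nb: "\<not> (\<exists>v\<in>{0..<n} - H. \<forall>x\<in>X. E x v)" using X Xn cX by auto
  have "X \<noteq> {}" using cX r1 by auto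
  then obtain x0 where x0: "x0 \<in> X" by auto
  have "common_nbhd n E X = T"
  proof
    show "common_nbhd n E X \<subseteq> T"
    proof
      fix v assume v: "v \<in> common_nbhd n E X"
      then have vn: "v \<in> {0..<n}" and vX: "\<forall>x\<in>X. E x v" by (auto simp: common_nbhd_def)
      then have "v \<in> H" using nb by blast
      then have "v \<in> {v\<in>H. E x0 v}" using vX x0 by auto
      moreover have "{v\<in>H. E x0 v} = T" using XV x0 by (auto simp: V_def)
      ultimately show "v \<in> T" by simp
    qed
    show "T \<subseteq> common_nbhd n E X"
    proof
      fix v assume v: "v \<in> T"
      have "\<forall>x\<in>X. E x v"
      proof
        fix x assume "x \<in> X"
        then have "{v\<in>H. E x v} = T" using XV by (auto simp: V_def)
        then show "E x v" using v by auto
      qed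
      then show "v \<in> common_nbhd n E X" using v TH H by (auto simp: common_nbhd_def)
    qed
  qed
  then show "X \<in> {X. X \<subseteq> {0..<n} \<and> card X = r \<and> common_nbhd n E X = T}" using Xn cX by auto
qed


lemma pow_diff_le:
  fixes x y :: real
  assumes "0 \<le> y" "y \<le> x"
  shows "x ^ Suc m - y ^ Suc m \<le> Suc m * (x - y) * x ^ m"
proof (induction m)
  case 0 then show ?case by simp
next
  case (Suc m)
  have "x ^ Suc (Suc m) - y ^ Suc (Suc m) = x * (x ^ Suc m - y ^ Suc m) + y ^ Suc m * (x - y)"
    by (simp add: algebra_simps)
  also have "\<dots> \<le> x * (Suc m * (x - y) * x ^ m) + x ^ Suc m * (x - y)"
    using Suc assms by (intro add_mono mult_left_mono mult_right_mono power_mono) auto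
  also have "\<dots> = Suc (Suc m) * (x - y) * x ^ Suc m" by (simp add: algebra_simps)
  finally show ?case .
qed

lemma pow_diff_le':
  fixes x y :: real
  assumes "0 \<le> y" "y \<le> x" "r \<ge> 1"
  shows "x ^ r - y ^ r \<le> r * (x - y) * x ^ (r - 1)"
proof -
  obtain m where "r = Suc m" using assms(3) by (cases r) auto
  then show ?thesis using pow_diff_le[OF assms(1,2), of m] by simp
qed

lemma rr_ge:
  assumes "r \<ge> (2::nat)"
  shows "real r ^ r \<ge> 2 * real r" "real r ^ r \<ge> 4"
proof -
  have "real r ^ 2 \<le> real r ^ r" using assms by (intro power_increasing) auto
  moreover have "2 * real r \<le> real r ^ 2" using assms by (simp add: power2_eq_square)
  moreover have "4 \<le> real r ^ 2" using assms
    by (metis (mono_tags) of_nat_numeral of_nat_le_iff of_nat_power power_mono le0 power2_eq_square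
        num_double numeral_times_numeral)
  ultimately show "real r ^ r \<ge> 2 * real r" "real r ^ r \<ge> 4" by linarith+
qed

definition eps_of :: "nat \<Rightarrow> nat \<Rightarrow> nat \<Rightarrow> real \<Rightarrow> real" where
  "eps_of l s r g = g / (8 * real (l + s) * real r ^ r)"

definition Hn_of :: "nat \<Rightarrow> nat \<Rightarrow> nat \<Rightarrow> real \<Rightarrow> nat" where
  "Hn_of l s r g = nat \<lceil>2 * real (l + s) / eps_of l s r g\<rceil>"

definition cst :: "nat \<Rightarrow> nat \<Rightarrow> nat \<Rightarrow> real \<Rightarrow> real" where
  "cst l s r g = real ((l - 2) div 2) * real r ^ 2
     + real (Hn_of l s r g) * real r * real (2 ^ Hn_of l s r g * ((l - 2) div 2 + 1 + s))"

lemma core: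
  fixes g :: real
  assumes G: "is_graph n E" and bf: "broom_free l s n E" and l4: "l \<ge> 4" and r2: "r \<ge> 2"
    and g: "0 < g" "g \<le> 1"
    and lower: "real ((l - 2) div 2) * (real n - real r) ^ r \<le> (\<Sum>v\<in>{0..<n}. real (degree n E v) ^ r)"
    and nr: "r \<le> n"
    and nlarge: "real n > 8 * real r * cst l s r g / g"
  shows "\<exists>B. B \<subseteq> {0..<n} \<and> card B = (l - 2) div 2 \<and>
            real (card {X. X \<subseteq> {0..<n} \<and> card X = r \<and> common_nbhd n E X = B})
              \<ge> (1 - g) * real (n choose r)"
proof -
  define k where "k = (l - 2) div 2"
  define t where "t = l + s"
  define \<epsilon> where "\<epsilon> = eps_of l s r g"
  define Hn where "Hn = Hn_of l s r g"
  define w0 where "w0 = 2 ^ Hn * (k + 1 + s)"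
  define c where "c = cst l s r g"
  define N where "N = real n"
  have k1: "k \<ge> 1" using l4 by (simp add: k_def)
  have lk: "l \<le> 2 * k + 3" by (simp add: k_def)
  have l2: "l \<ge> 2" using l4 by simp
  have t1: "real t \<ge> 1" using l4 by (simp add: t_def)
  have rr: "real r ^ r \<ge> 2 * real r" "real r ^ r \<ge> 4" using rr_ge[OF r2] by auto
  have Rpos: "real r ^ r > 0" using rr by linarith
  have te: "real t * \<epsilon> = g / (8 * real r ^ r)"
    unfolding \<epsilon>_def eps_of_def t_def[symmetric] using t1 Rpos by (simp add: field_simps)
  have te_pos: "real t * \<epsilon> > 0" unfolding te using g Rpos by simp
  have epos: "\<epsilon> > 0" using te_pos t1 by (simp add: zero_less_mult_iff)
  have te_le: "real t * \<epsilon> \<le> 1 / 32"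
  proof -
    have "g / (8 * real r ^ r) \<le> 1 / (8 * 4)" using g rr Rpos
      by (intro frac_le) auto
    then show ?thesis unfolding te by simp
  qed
  have ele: "\<epsilon> \<le> 1"
  proof -
    have "\<epsilon> \<le> real t * \<epsilon>" using t1 epos by (simp add: mult_le_cancel_right1)
    then show ?thesis using te_le by linarith
  qed
  have c_def': "c = real k * real r ^ 2 + real Hn * real r * real w0"
    by (simp add: c_def cst_def k_def Hn_def w0_def)
  have c0: "c \<ge> 0" unfolding c_def' by simp
  have npos: "n > 0" using nr r2 by simp
  have Npos: "N > 0" using npos by (simp add: N_def)
  have NrN: "real r \<le> N" using nr by (simp add: N_def)
  have Se: "(\<Sum>v\<in>{0..<n}. degree n E v) \<le> 2 * t * n"
    using edge_bound[OF G bf l2] by (simp add: t_def)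
  define H where "H = {v\<in>{0..<n}. \<epsilon> * real n \<le> real (degree n E v)}"
  define L where "L = {v\<in>{0..<n}. real (degree n E v) < \<epsilon> * real n}"
  define W where "W = {u\<in>{0..<n}. k + 1 \<le> card {v\<in>H. E u v}}"
  define \<T> where "\<T> = {T. T \<subseteq> H \<and> card T = k}"
  define V where "V = (\<lambda>T. {u\<in>{0..<n}. u \<notin> W \<and> {v\<in>H. E u v} = T})"
  have Hsub: "H \<subseteq> {0..<n}" by (auto simp: H_def)
  have LH: "L = {0..<n} - H" by (auto simp: L_def H_def)
  have fH: "finite H" using Hsub finite_subset by blast
  have fT: "finite \<T>" unfolding \<T>_def by (rule finite_subset[of _ "Pow H"]) (auto simp: fH)
  have hHn: "card H \<le> Hn"
  proof -
    have "real (card H) \<le> 2 * real t / \<epsilon>" using H_bound[OF H_def epos npos Se] .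
    also have "\<dots> \<le> real Hn" unfolding Hn_def Hn_of_def \<epsilon>_def[symmetric] t_def[symmetric]
      by linarith
    finally show ?thesis by simp
  qed
  have hW: "card W \<le> w0"
  proof -
    have "card W \<le> 2 ^ card H * (k + 1 + s)" by (rule W_bound[OF G bf l2 lk Hsub W_def])
    also have "\<dots> \<le> w0" unfolding w0_def using hHn by (intro mult_right_mono power_increasing) auto
    finally show ?thesis .
  qed
  have Wsub: "W \<subseteq> {0..<n}" by (auto simp: W_def)
  have Wn: "card W \<le> n" using card_mono[OF _ Wsub] by simp
  have TB: "(\<Sum>v\<in>H. degree n E v ^ r) \<le> card H * (n ^ r - (n - card W) ^ r) + (k - 1) * n ^ r
          + (\<Sum>T\<in>\<T>. card (V T) ^ r)"
    using tuple_bound[OF G _ k1 Hsub W_def \<T>_def V_def] r2 by simp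
  define A where "A = (\<Sum>T\<in>\<T>. real (card (V T)) ^ r)"
  have pw: "(n - card W) ^ r \<le> n ^ r" by (intro power_mono) auto
  have TBr: "(\<Sum>v\<in>H. real (degree n E v) ^ r)
      \<le> real (card H) * (N ^ r - (N - real (card W)) ^ r) + (real k - 1) * N ^ r + A"
  proof -
    have "real (\<Sum>v\<in>H. degree n E v ^ r) \<le> real (card H * (n ^ r - (n - card W) ^ r) + (k - 1) * n ^ r
          + (\<Sum>T\<in>\<T>. card (V T) ^ r))" using TB by (simp only: of_nat_le_iff)
    also have "\<dots> = real (card H) * (N ^ r - (N - real (card W)) ^ r) + (real k - 1) * N ^ r + A"
      using pw Wn k1 by (simp add: A_def N_def of_nat_diff)
    finally show ?thesis by simp
  qed
  have Wdiff: "N ^ r - (N - real (card W)) ^ r \<le> real r * real (card W) * N ^ (r - 1)"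
    using pow_diff_le'[of "N - real (card W)" N r] Wn r2 by (simp add: N_def)
  have Nr1: "N ^ (r - 1) \<ge> 0" using Npos by simp
  have HW: "real (card H) * (N ^ r - (N - real (card W)) ^ r) \<le> c2 * N ^ (r - 1)"
    if "c2 = real Hn * real r * real w0" for c2
  proof -
    have "real (card H) * (N ^ r - (N - real (card W)) ^ r) \<le> real Hn * (real r * real (card W) * N ^ (r - 1))"
      using Wdiff hHn Wn by (intro mult_mono) (auto simp: N_def intro!: power_mono)
    also have "\<dots> \<le> real Hn * (real r * real w0 * N ^ (r - 1))"
      using hW Nr1 by (intro mult_left_mono mult_right_mono) auto
    finally show ?thesis using that by (simp add: algebra_simps)
  qed
  have SL: "(\<Sum>v\<in>L. real (degree n E v) ^ r) \<le> 2 * (real t * \<epsilon>) * N ^ r"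
  proof -
    have "(\<Sum>v\<in>L. real (degree n E v) ^ r) \<le> (\<epsilon> * n) ^ (r - 1) * (2 * t * n)"
      using L_bound[OF L_def _ epos Se] r2 by simp
    also have "\<dots> = 2 * real t * \<epsilon> ^ (r - 1) * (N ^ (r - 1) * N)"
      by (simp add: N_def power_mult_distrib algebra_simps)
    also have "\<dots> = 2 * real t * \<epsilon> ^ (r - 1) * N ^ r"
      using r2 by (metis Suc_diff_le power_Suc2 diff_Suc_1 le_trans one_le_numeral)
    also have "\<dots> \<le> 2 * real t * \<epsilon> * N ^ r"
    proof -
      have "\<epsilon> ^ (r - 1) \<le> \<epsilon> ^ 1" using epos ele r2 by (intro power_decreasing) auto
      then show ?thesis using t1 Npos by (intro mult_right_mono mult_left_mono) auto
    qed
    finally show ?thesis by (simp add: algebra_simps)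
  qed
  have Ssplit: "(\<Sum>v\<in>{0..<n}. real (degree n E v) ^ r) = (\<Sum>v\<in>H. real (degree n E v) ^ r) + (\<Sum>v\<in>L. real (degree n E v) ^ r)"
    unfolding LH using sum.subset_diff[OF Hsub, of "\<lambda>v. real (degree n E v) ^ r"] by simp
  have kpow: "real k * (N - real r) ^ r \<ge> real k * N ^ r - real k * real r ^ 2 * N ^ (r - 1)"
  proof -
    have "N ^ r - (N - real r) ^ r \<le> real r * (N - (N - real r)) * N ^ (r - 1)"
      using pow_diff_le'[of "N - real r" N r] NrN r2 by simp
    then have "N ^ r - (N - real r) ^ r \<le> real r ^ 2 * N ^ (r - 1)" by (simp add: power2_eq_square)
    then have "real k * (N ^ r - (N - real r) ^ r) \<le> real k * (real r ^ 2 * N ^ (r - 1))"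
      by (intro mult_left_mono) auto
    then show ?thesis by (simp add: algebra_simps)
  qed
  define \<delta> where "\<delta> = 2 * (real t * \<epsilon>) + c / N"
  have cN: "c * N ^ (r - 1) = (c / N) * N ^ r"
  proof -
    obtain r' where r': "r = Suc r'" using r2 by (cases r) auto
    show ?thesis using Npos unfolding r' by (simp add: field_simps)
  qed
  have Alow: "A \<ge> (1 - \<delta>) * N ^ r"
  proof -
    have "real k * N ^ r - real k * real r ^ 2 * N ^ (r - 1) \<le> (\<Sum>v\<in>{0..<n}. real (degree n E v) ^ r)"
      using kpow lower by (simp add: N_def k_def)
    then have "real k * N ^ r - real k * real r ^ 2 * N ^ (r - 1)
        \<le> real Hn * real r * real w0 * N ^ (r - 1) + (real k - 1) * N ^ r + A + 2 * (real t * \<epsilon>) * N ^ r"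
      using Ssplit TBr HW[OF refl] SL by linarith
    then have "A \<ge> N ^ r - c * N ^ (r - 1) - 2 * (real t * \<epsilon>) * N ^ r"
      unfolding c_def' by (simp add: algebra_simps)
    then show ?thesis unfolding cN \<delta>_def by (simp add: algebra_simps)
  qed
  define R where "R = real r ^ r"
  have Rpos': "R > 0" using Rpos by (simp add: R_def)
  have cNg: "2 * real r * (c / N) \<le> g / 4"
  proof -
    have "8 * real r * c / g < N" using nlarge by (simp add: N_def c_def)
    then have "8 * real r * c < N * g" using g by (simp add: pos_divide_less_eq)
    then have "2 * real r * c \<le> g / 4 * N" by (simp add: algebra_simps)
    then show ?thesis using Npos by (simp add: field_simps)
  qed
  have cN0: "c / N \<ge> 0" using c0 Npos by simp
  have cN16: "c / N \<le> 1 / 16"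
  proof -
    have "4 * (c / N) \<le> 2 * real r * (c / N)" using r2 cN0 by (intro mult_right_mono) auto
    then show ?thesis using cNg g by linarith
  qed
  have dpos: "\<delta> > 0" using te_pos cN0 unfolding \<delta>_def by linarith
  have dle: "\<delta> \<le> 1 / 4" using te_le cN16 unfolding \<delta>_def by linarith
  have SumV: "(\<Sum>T\<in>\<T>. real (card (V T))) \<le> N"
  proof -
    have "(\<Sum>T\<in>\<T>. card (V T)) = card (\<Union>T\<in>\<T>. V T)"
      by (rule card_UN_disjoint[symmetric]) (use fT in \<open>auto simp: V_def\<close>)
    also have "\<dots> \<le> card {0..<n}" by (intro card_mono) (auto simp: V_def)
    finally have "(\<Sum>T\<in>\<T>. card (V T)) \<le> n" by simp
    then have "real (\<Sum>T\<in>\<T>. card (V T)) \<le> real n" by (simp only: of_nat_le_iff)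
    then show ?thesis by (simp add: N_def)
  qed
  define q where "q = (1 - 2 * \<delta>) * N"
  have q0: "q \<ge> 0" using dle Npos by (simp add: q_def)
  have "\<exists>T\<in>\<T>. real (card (V T)) \<ge> q"
  proof (rule ccontr)
    assume "\<not> (\<exists>T\<in>\<T>. real (card (V T)) \<ge> q)"
    then have lt: "\<And>T. T \<in> \<T> \<Longrightarrow> real (card (V T)) \<le> q" by force
    have "A \<le> (\<Sum>T\<in>\<T>. real (card (V T)) * q ^ (r - 1))"
      unfolding A_def
    proof (rule sum_mono)
      fix T assume T: "T \<in> \<T>"
      obtain r' where r': "r = Suc r'" using r2 by (cases r) auto
      have "real (card (V T)) ^ r = real (card (V T)) * real (card (V T)) ^ (r - 1)" by (simp add: r')
      also have "\<dots> \<le> real (card (V T)) * q ^ (r - 1)"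
        using lt[OF T] by (intro mult_left_mono power_mono) auto
      finally show "real (card (V T)) ^ r \<le> real (card (V T)) * q ^ (r - 1)" .
    qed
    also have "\<dots> = q ^ (r - 1) * (\<Sum>T\<in>\<T>. real (card (V T)))" by (simp add: sum_distrib_left mult.commute)
    also have "\<dots> \<le> q ^ (r - 1) * N" using SumV q0 by (intro mult_left_mono) auto
    also have "\<dots> = (1 - 2 * \<delta>) ^ (r - 1) * N ^ r"
    proof -
      obtain r' where r': "r = Suc r'" using r2 by (cases r) auto
      show ?thesis unfolding q_def r' by (simp only: diff_Suc_1 power_mult_distrib power_Suc mult_ac)
    qed
    also have "\<dots> \<le> (1 - 2 * \<delta>) * N ^ r"
    proof -
      have "(1 - 2 * \<delta>) ^ (r - 1) \<le> (1 - 2 * \<delta>) ^ 1" using dle dpos r2 by (intro power_decreasing) auto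
      then show ?thesis using Npos by (intro mult_right_mono) auto
    qed
    also have "\<dots> < (1 - \<delta>) * N ^ r" using dpos Npos by (intro mult_strict_right_mono) auto
    finally show False using Alow by linarith
  qed
  then obtain T where TT: "T \<in> \<T>" and aT: "real (card (V T)) \<ge> q" by blast
  define a where "a = card (V T)"
  have TH: "T \<subseteq> H" and cT: "card T = k" using TT by (auto simp: \<T>_def)
  have Vn: "V T \<subseteq> {0..<n}" by (auto simp: V_def)
  have fV: "finite (V T)" using Vn finite_subset by blast
  have an: "a \<le> n" using card_mono[OF _ Vn] by (simp add: a_def)
  define bad where "bad = {X. X \<subseteq> {0..<n} \<and> card X = r \<and> (\<exists>v\<in>{0..<n} - H. \<forall>x\<in>X. E x v)}"
  define target where "target = {X. X \<subseteq> {0..<n} \<and> card X = r \<and> common_nbhd n E X = T}"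
  have sub: "{X. X \<subseteq> V T \<and> card X = r} - bad \<subseteq> target"
    unfolding bad_def target_def by (rule good_subset[OF G _ Hsub TH]) (use r2 in \<open>simp_all add: V_def\<close>)
  have ftarget: "finite target"
    unfolding target_def by (rule finite_subset[of _ "Pow {0..<n}"]) auto
  have fbad: "finite bad"
    unfolding bad_def by (rule finite_subset[of _ "Pow {0..<n}"]) auto
  have X4: "real (card target) \<ge> real (a choose r) - real (card bad)"
  proof -
    have "card {X. X \<subseteq> V T \<and> card X = r} - card bad \<le> card ({X. X \<subseteq> V T \<and> card X = r} - bad)"
      using fbad by (rule diff_card_le_card_Diff)
    also have "\<dots> \<le> card target" using card_mono[OF ftarget sub] .
    finally have "(a choose r) - card bad \<le> card target" using n_subsets[OF fV, of r] by (simp add: a_def)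
    then show ?thesis by linarith
  qed
  have badc: "card bad \<le> (\<Sum>v\<in>{0..<n} - H. degree n E v choose r)"
    unfolding bad_def by (rule bad_count[OF G]) auto
  have X2': "real (card bad) \<le> 2 * (real t * \<epsilon>) * N ^ r"
  proof -
    have "real (card bad) \<le> (\<Sum>v\<in>{0..<n} - H. real (degree n E v choose r))"
      using badc by (metis of_nat_le_iff of_nat_sum)
    also have "\<dots> \<le> (\<Sum>v\<in>L. real (degree n E v) ^ r)"
      unfolding LH
    proof (rule sum_mono)
      fix v
      have "(degree n E v choose r) \<le> fact r * (degree n E v choose r)" by simp
      also have "\<dots> \<le> degree n E v ^ r" by (rule fact_binom_le)
      finally have "(degree n E v choose r) \<le> degree n E v ^ r" .
      then have "real (degree n E v choose r) \<le> real (degree n E v ^ r)" by (simp only: of_nat_le_iff)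
      then show "real (degree n E v choose r) \<le> real (degree n E v) ^ r" by simp
    qed
    also have "\<dots> \<le> 2 * (real t * \<epsilon>) * N ^ r" by (rule SL)
    finally show ?thesis .
  qed
  define Cn where "Cn = real (n choose r)"
  have Cn0: "Cn \<ge> 0" by (simp add: Cn_def)
  have NR: "N ^ r \<le> R * Cn"
  proof -
    have "(N / real r) ^ r \<le> Cn" unfolding Cn_def N_def by (rule binomial_ge_n_over_k_pow_k[OF nr])
    moreover have "(N / real r) ^ r = N ^ r / R" by (simp add: R_def power_divide)
    ultimately have "N ^ r / R \<le> Cn" by simp
    then show ?thesis using Rpos' by (simp add: divide_le_eq mult.commute)
  qed
  have X2: "real (card bad) \<le> (2 * (real t * \<epsilon>) * R) * Cn"
  proof -
    have "2 * (real t * \<epsilon>) * N ^ r \<le> 2 * (real t * \<epsilon>) * (R * Cn)"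
      using NR te_pos by (intro mult_left_mono) auto
    then show ?thesis using X2' by (simp add: algebra_simps)
  qed
  have X3: "Cn \<le> real (a choose r) + real ((n - a) * ((n - 1) choose (r - 1)))"
  proof -
    have "n choose r \<le> ((n - (n - a)) choose r) + (n - a) * ((n - 1) choose (r - 1))"
      using binom_drop[of "n - a" n r] r2 by simp
    then have "n choose r \<le> (a choose r) + (n - a) * ((n - 1) choose (r - 1))" using an by simp
    then show ?thesis unfolding Cn_def by (metis of_nat_add of_nat_le_iff)
  qed
  have X1: "real ((n - a) * ((n - 1) choose (r - 1))) \<le> (2 * \<delta> * real r) * Cn"
  proof -
    have na: "real (n - a) \<le> 2 * \<delta> * N"
      using aT an unfolding q_def a_def[symmetric] by (simp add: of_nat_diff N_def algebra_simps)
    have ab: "real n * real ((n - 1) choose (r - 1)) = real r * Cn"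
      using binom_absorb[of r n] r2 unfolding Cn_def by (metis of_nat_mult one_le_numeral le_trans)
    have "real ((n - a) * ((n - 1) choose (r - 1))) = real (n - a) * real ((n - 1) choose (r - 1))" by simp
    also have "\<dots> \<le> (2 * \<delta> * N) * real ((n - 1) choose (r - 1))" using na by (intro mult_right_mono) auto
    also have "\<dots> = 2 * \<delta> * (real n * real ((n - 1) choose (r - 1)))" by (simp add: N_def)
    also have "\<dots> = (2 * \<delta> * real r) * Cn" using ab by simp
    finally show ?thesis .
  qed
  have X5: "2 * \<delta> * real r + 2 * (real t * \<epsilon>) * R \<le> g"
  proof -
    have rR: "real r / R \<le> 1 / 2" using rr Rpos' by (simp add: R_def divide_le_eq)
    have e1: "4 * real r * (real t * \<epsilon>) \<le> g / 4"
    proof -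
      have "4 * real r * (real t * \<epsilon>) = g / 2 * (real r / R)" unfolding te R_def by (simp add: field_simps)
      also have "\<dots> \<le> g / 2 * (1 / 2)" using rR g by (intro mult_left_mono) auto
      finally show ?thesis by simp
    qed
    have e2: "2 * (real t * \<epsilon>) * R = g / 4" unfolding te R_def using Rpos by (simp add: field_simps)
    have "2 * \<delta> * real r = 4 * real r * (real t * \<epsilon>) + 2 * real r * (c / N)"
      unfolding \<delta>_def by (simp add: algebra_simps)
    then show ?thesis using e1 e2 cNg g by linarith
  qed
  have fin: "(1 - g) * Cn \<le> Cn - (2 * \<delta> * real r) * Cn - (2 * (real t * \<epsilon>) * R) * Cn"
  proof -
    have "(2 * \<delta> * real r + 2 * (real t * \<epsilon>) * R) * Cn \<le> g * Cn" using X5 Cn0 by (rule mult_right_mono)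
    then show ?thesis by (simp add: algebra_simps)
  qed
  have "real (card target) \<ge> (1 - g) * Cn" using X1 X2 X3 X4 fin by linarith
  moreover have "T \<subseteq> {0..<n}" using TH Hsub by blast
  ultimately show ?thesis using cT unfolding target_def Cn_def k_def by blast
qed


lemma lower_epow:
  assumes max: "\<forall>E'. is_graph n E' \<and> broom_free l s n E' \<longrightarrow> e_pow r n E' \<le> e_pow r n E"
    and l2: "l \<ge> 2" and kn: "(l - 2) div 2 \<le> n" and r1: "r \<ge> 1"
  shows "(l - 2) div 2 * (n - r) ^ r \<le> e_pow r n E"
proof -
  have "(l - 2) div 2 * (n - r) ^ r \<le> (l - 2) div 2 * (n - 1) ^ r"
    using l2 r1 by (intro mult_left_mono power_mono) auto
  also have "\<dots> \<le> e_pow r n (E0 n ((l - 2) div 2))" by (rule E0_epow[OF kn])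
  also have "\<dots> \<le> e_pow r n E" using max E0_graph E0_free[OF l2] by blast
  finally show ?thesis .
qed

lemma star_le_epow: "fact r * star_count r n E \<le> e_pow r n E"
proof -
  have "fact r * star_count r n E = (\<Sum>u\<in>{0..<n}. fact r * (degree n E u choose r))"
    by (simp add: star_count_def sum_distrib_left)
  also have "\<dots> \<le> (\<Sum>u\<in>{0..<n}. degree n E u ^ r)" by (intro sum_mono fact_binom_le)
  finally show ?thesis by (simp add: e_pow_def)
qed

lemma lower_star:
  assumes max: "\<forall>E'. is_graph n E' \<and> broom_free l s n E' \<longrightarrow> star_count r n E' \<le> star_count r n E"
    and l2: "l \<ge> 2" and kn: "(l - 2) div 2 \<le> n" and rn: "r < n"
  shows "(l - 2) div 2 * (n - r) ^ r \<le> e_pow r n E"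
proof -
  have "(n - 1 + 1 - r) ^ r \<le> fact r * ((n - 1) choose r)" using rn by (intro fact_binom_ge) auto
  then have "(n - r) ^ r \<le> fact r * ((n - 1) choose r)" using rn by simp
  then have "(l - 2) div 2 * (n - r) ^ r \<le> (l - 2) div 2 * (fact r * ((n - 1) choose r))"
    by (rule mult_left_mono) simp
  also have "\<dots> = fact r * ((l - 2) div 2 * ((n - 1) choose r))" by (simp add: algebra_simps)
  also have "\<dots> \<le> fact r * star_count r n (E0 n ((l - 2) div 2))"
    by (intro mult_left_mono E0_star[OF kn]) simp
  also have "\<dots> \<le> fact r * star_count r n E"
    using max E0_graph E0_free[OF l2] by (intro mult_left_mono) auto
  also have "\<dots> \<le> e_pow r n E" by (rule star_le_epow)
  finally show ?thesis .
qed

theorem mainTheorem5: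
  fixes l s r :: nat and \<gamma> :: real
  assumes "l \<ge> 4" and "r \<ge> 2" and "\<gamma> > 0"
  shows "\<exists>n0. \<forall>n \<ge> n0. \<forall>E. is_graph n E \<and> broom_free l s n E \<and>
     ((\<forall>E'. is_graph n E' \<and> broom_free l s n E' \<longrightarrow> e_pow r n E' \<le> e_pow r n E) \<or>
      (\<forall>E'. is_graph n E' \<and> broom_free l s n E' \<longrightarrow> star_count r n E' \<le> star_count r n E))
     \<longrightarrow> (\<exists>B. B \<subseteq> {0..<n} \<and> card B = (l - 2) div 2 \<and>
            real (card {X. X \<subseteq> {0..<n} \<and> card X = r \<and> common_nbhd n E X = B})
              \<ge> (1 - \<gamma>) * real (n choose r))"
proof -
  define g where "g = min \<gamma> 1"
  have g: "0 < g" "g \<le> 1" "g \<le> \<gamma>" using assms(3) by (auto simp: g_def)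
  define n0 where "n0 = nat \<lceil>8 * real r * cst l s r g / g\<rceil> + r + l + 1"
  have "\<forall>n \<ge> n0. \<forall>E. is_graph n E \<and> broom_free l s n E \<and>
     ((\<forall>E'. is_graph n E' \<and> broom_free l s n E' \<longrightarrow> e_pow r n E' \<le> e_pow r n E) \<or>
      (\<forall>E'. is_graph n E' \<and> broom_free l s n E' \<longrightarrow> star_count r n E' \<le> star_count r n E))
     \<longrightarrow> (\<exists>B. B \<subseteq> {0..<n} \<and> card B = (l - 2) div 2 \<and>
            real (card {X. X \<subseteq> {0..<n} \<and> card X = r \<and> common_nbhd n E X = B})
              \<ge> (1 - \<gamma>) * real (n choose r))"
  proof (intro allI impI)
    fix n E
    assume n: "n \<ge> n0"
      and H: "is_graph n E \<and> broom_free l s n E \<and>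
     ((\<forall>E'. is_graph n E' \<and> broom_free l s n E' \<longrightarrow> e_pow r n E' \<le> e_pow r n E) \<or>
      (\<forall>E'. is_graph n E' \<and> broom_free l s n E' \<longrightarrow> star_count r n E' \<le> star_count r n E))"
    have G: "is_graph n E" and bf: "broom_free l s n E" using H by auto
    have l2: "l \<ge> 2" using assms(1) by simp
    have kn: "(l - 2) div 2 \<le> n" using n unfolding n0_def by linarith
    have rn: "r < n" using n unfolding n0_def by linarith
    have big: "real n > 8 * real r * cst l s r g / g"
    proof -
      have "8 * real r * cst l s r g / g \<le> real (nat \<lceil>8 * real r * cst l s r g / g\<rceil>)" by linarith
      moreover have "nat \<lceil>8 * real r * cst l s r g / g\<rceil> < n" using n unfolding n0_def by linarith
      ultimately show ?thesis by linarith
    qed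
    have mx: "(\<forall>E'. is_graph n E' \<and> broom_free l s n E' \<longrightarrow> e_pow r n E' \<le> e_pow r n E) \<or>
      (\<forall>E'. is_graph n E' \<and> broom_free l s n E' \<longrightarrow> star_count r n E' \<le> star_count r n E)"
      using H by (elim conjE)
    have r1: "r \<ge> 1" using assms(2) by simp
    have low_nat: "(l - 2) div 2 * (n - r) ^ r \<le> e_pow r n E"
      using mx
    proof
      assume m: "\<forall>E'. is_graph n E' \<and> broom_free l s n E' \<longrightarrow> e_pow r n E' \<le> e_pow r n E"
      show ?thesis by (rule lower_epow[OF m l2 kn r1])
    next
      assume m: "\<forall>E'. is_graph n E' \<and> broom_free l s n E' \<longrightarrow> star_count r n E' \<le> star_count r n E"
      show ?thesis by (rule lower_star[OF m l2 kn rn])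
    qed
    have lower: "real ((l - 2) div 2) * (real n - real r) ^ r \<le> (\<Sum>v\<in>{0..<n}. real (degree n E v) ^ r)"
    proof -
      have "real ((l - 2) div 2 * (n - r) ^ r) \<le> real (e_pow r n E)" using low_nat by (simp only: of_nat_le_iff)
      then show ?thesis using rn by (simp add: e_pow_def of_nat_diff)
    qed
    obtain B where B: "B \<subseteq> {0..<n}" "card B = (l - 2) div 2"
      "real (card {X. X \<subseteq> {0..<n} \<and> card X = r \<and> common_nbhd n E X = B}) \<ge> (1 - g) * real (n choose r)"
      using core[OF G bf assms(1) assms(2) g(1) g(2) lower _ big] rn by auto
    have "(1 - \<gamma>) * real (n choose r) \<le> (1 - g) * real (n choose r)"
      using g by (intro mult_right_mono) auto
    then show "\<exists>B. B \<subseteq> {0..<n} \<and> card B = (l - 2) div 2 \<and>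
            real (card {X. X \<subseteq> {0..<n} \<and> card X = r \<and> common_nbhd n E X = B})
              \<ge> (1 - \<gamma>) * real (n choose r)" using B by (intro exI[of _ B]) auto
  qed
  then show ?thesis by blast
qed


end
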